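(* Under the setup described in the context (a connected graph $G$ on $n$ vertices with $\mathrm{col}(G)=d\geq 3$, $M=K_1\vee G$ with apex $w$, and an $m$-fold cover $\mathcal{H}=(L,H)$ of $M$ with $m\geq d+3$ in which $E_H(L(u),L(v))$ is a perfect matching for every $uv\in E(M)$): if $L(w)$ contains exactly $s$ vertices that are not level vertices, then $$P_{DP}(M,\mathcal{H})\geq m\,P_{DP}(G,m-1)+s\,(m-d-2)^{n-2}.$$
   Context: All graphs are finite and simple. $\mathrm{col}(G)$ is the smallest $d$ such that some ordering of $V(G)$ has each vertex with at most $d-1$ earlier neighbors. $M=K_1\vee G$ is the join of $G$ with a single new vertex $w$. A cover of a graph $G$ is a pair $\mathcal{H}=(L,H)$ where $H$ is a graph and $L:V(G)\to\mathcal{P}(V(H))$ satisfies: (1) the sets $L(u)$ partition $V(H)$; (2) each $H[L(u)]$ is complete; (3) if $E_H(L(u),L(v))\neq\emptyset$ then $u=v$ or $uv\in E(G)$; (4) if $uv\in E(G)$ then $E_H(L(u),L(v))$ is a matching. $E_H(S,U)$ is the set of edges of $H$ between $S$ and $U$; the cover is $m$-fold if all $|L(u)|=m$; an $\mathcal{H}$-coloring is an independent set of $H$ of size $|V(G)|$, $P_{DP}(G,\mathcal{H})$ counts them, and $P_{DP}(G,m)$ is the minimum of $P_{DP}(G,\mathcal{H})$ over $m$-fold covers. Setup: write $L(w)=\{(w,j):j\in[m]\}$; for $j\in[m]$ and $v\in V(G)$ let $H^{(j)}=H-N_H[(w,j)]$ and $L^{(j)}(v)=L(v)\setminus N_H((w,j))$,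 so $\mathcal{H}^{(j)}=(L^{(j)},H^{(j)})$ is an $(m-1)$-fold cover of $G$. Cross-edges of $H^{(j)}$ are its edges joining $L^{(j)}(x)$ and $L^{(j)}(y)$ for distinct $x,y\in V(G)$. The vertex $(w,t)$ is a level vertex if $H^{(t)}$ has exactly $|E(G)|(m-1)$ cross-edges. *)

theory Defs
  imports Main
begin

definition simple_graph :: "'a set \<Rightarrow> 'a set set \<Rightarrow> bool" where
  "simple_graph V E \<longleftrightarrow> finite V \<and>
     (\<forall>e\<in>E. \<exists>u v. e = {u, v} \<and> u \<noteq> v \<and> u \<in> V \<and> v \<in> V)"

definition connected_graph :: "'a set \<Rightarrow> 'a set set \<Rightarrow> bool" where
  "connected_graph V E \<longleftrightarrow> V \<noteq> {} \<and>
     (\<forall>u\<in>V. \<forall>v\<in>V. (u, v) \<in> {(x, y). {x, y} \<in> E}\<^sup>*)"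

definition col :: "'a set \<Rightarrow> 'a set set \<Rightarrow> nat" where
  "col V E = (LEAST d. \<exists>xs. distinct xs \<and> set xs = V \<and>
      (\<forall>i<length xs. card {j. j < i \<and> {xs ! j, xs ! i} \<in> E} + 1 \<le> d))"

definition join_V :: "'a \<Rightarrow> 'a set \<Rightarrow> 'a set" where
  "join_V w V = insert w V"

definition join_E :: "'a \<Rightarrow> 'a set \<Rightarrow> 'a set set \<Rightarrow> 'a set set" where
  "join_E w V E = E \<union> {{w, v} | v. v \<in> V}"

definition is_cover :: "'a set \<Rightarrow> 'a set set \<Rightarrow> ('a \<Rightarrow> 'b set) \<Rightarrow> 'b set \<Rightarrow> 'b set set \<Rightarrow> bool" where
  "is_cover V E L HV HE \<longleftrightarrow>
     simple_graph HV HE \<and>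
     \<comment> \<open>(1) the sets L(u) partition V(H)\<close>
     (\<Union>u\<in>V. L u) = HV \<and>
     (\<forall>u\<in>V. \<forall>v\<in>V. u \<noteq> v \<longrightarrow> L u \<inter> L v = {}) \<and>
     \<comment> \<open>(2) each H[L(u)] is complete\<close>
     (\<forall>u\<in>V. \<forall>x\<in>L u. \<forall>y\<in>L u. x \<noteq> y \<longrightarrow> {x, y} \<in> HE) \<and>
     \<comment> \<open>(3) edges between L(u), L(v) only if u = v or uv is an edge\<close>
     (\<forall>u\<in>V. \<forall>v\<in>V. (\<exists>x\<in>L u. \<exists>y\<in>L v. {x, y} \<in> HE) \<longrightarrow> u = v \<or> {u, v} \<in> E) \<and>
     \<comment> \<open>(4) for uv in E, E_H(L(u),L(v)) is a matching\<close>
     (\<forall>u\<in>V. \<forall>v\<in>V. {u, v} \<in> E \<longrightarrow>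
        (\<forall>x\<in>L u. \<forall>y1\<in>L v. \<forall>y2\<in>L v. {x, y1} \<in> HE \<longrightarrow> {x, y2} \<in> HE \<longrightarrow> y1 = y2))"

definition m_fold :: "'a set \<Rightarrow> ('a \<Rightarrow> 'b set) \<Rightarrow> nat \<Rightarrow> bool" where
  "m_fold V L m \<longleftrightarrow> (\<forall>u\<in>V. finite (L u) \<and> card (L u) = m)"

definition independent :: "'b set set \<Rightarrow> 'b set \<Rightarrow> bool" where
  "independent HE I \<longleftrightarrow> (\<forall>x\<in>I. \<forall>y\<in>I. {x, y} \<notin> HE)"

definition P_DP_cover :: "'a set \<Rightarrow> 'b set \<Rightarrow> 'b set set \<Rightarrow> nat" where
  "P_DP_cover V HV HE = card {I. I \<subseteq> HV \<and> independent HE I \<and> card I = card V}"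

text \<open>DP color function: minimum over all m-fold covers. Every m-fold cover is
  isomorphic to one with V(H) = V \<times> {0..<m}, L(u) = {u} \<times> {0..<m}.\<close>
definition P_DP :: "'a set \<Rightarrow> 'a set set \<Rightarrow> nat \<Rightarrow> nat" where
  "P_DP V E m = Min ((\<lambda>HE. P_DP_cover V (V \<times> {..<m}) HE) `
      {HE. is_cover V E (\<lambda>u. {u} \<times> {..<m}) (V \<times> {..<m}) HE})"

definition perfect_matching_between :: "'b set set \<Rightarrow> 'b set \<Rightarrow> 'b set \<Rightarrow> bool" where
  "perfect_matching_between HE A B \<longleftrightarrow>
     (\<forall>x\<in>A. \<exists>!y. y \<in> B \<and> {x, y} \<in> HE) \<and> (\<forall>y\<in>B. \<exists>!x. x \<in> A \<and> {x, y} \<in> HE)"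

text \<open>Number of cross-edges of H^(t) = H - N_H[t], where L^(t)(v) = L(v) - N_H(t).\<close>
definition cross_edges_count :: "'a set \<Rightarrow> ('a \<Rightarrow> 'b set) \<Rightarrow> 'b set set \<Rightarrow> 'b \<Rightarrow> nat" where
  "cross_edges_count V L HE t = card {e \<in> HE. \<exists>x\<in>V. \<exists>y\<in>V. x \<noteq> y \<and>
      (\<exists>a \<in> L x - {z. {t, z} \<in> HE}. \<exists>b \<in> L y - {z. {t, z} \<in> HE}. e = {a, b})}"

definition level_vertex :: "'a set \<Rightarrow> 'a set set \<Rightarrow> ('a \<Rightarrow> 'b set) \<Rightarrow> 'b set set \<Rightarrow> nat \<Rightarrow> 'b \<Rightarrow> bool" where
  "level_vertex V E L HE m t \<longleftrightarrow> cross_edges_count V L HE t = card E * (m - 1)"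

end

theory Submission imports Defs "HOL-Library.FuncSet" begin


definition Fn :: "('a \<Rightarrow> 'c set) \<Rightarrow> ('c \<Rightarrow> 'c \<Rightarrow> bool) \<Rightarrow> 'a set \<Rightarrow> ('a \<Rightarrow> 'c) set" where
"Fn A R S = {f. (\<forall>y. y \<notin> S \<longrightarrow> f y = undefined) \<and> (\<forall>y\<in>S. f y \<in> A y) \<and> (\<forall>y\<in>S. \<forall>z\<in>S. \<not> R (f y) (f z))}"

lemma Fn_finite: "finite S \<Longrightarrow> (\<forall>y\<in>S. finite (A y)) \<Longrightarrow> finite (Fn A R S)"
proof -
  assume a: "finite S" "\<forall>y\<in>S. finite (A y)"
  have "Fn A R S \<subseteq> Pi\<^sub>E S A" unfolding Fn_def PiE_def extensional_def by auto
  moreover have "finite (Pi\<^sub>E S A)" using a by (intro finite_PiE) auto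
  ultimately show ?thesis by (rule finite_subset)
qed

lemma greedy_step:
  assumes fin: "finite S" and finA: "\<forall>y\<in>insert x S. finite (A y)" and xS: "x \<notin> S"
    and symR: "\<forall>p q. R p q = R q p" and irr: "\<forall>p. \<not> R p p"
    and one: "\<forall>y\<in>S. \<forall>c\<in>A y. card {c'\<in>A x. R c c'} \<le> 1"
    and nadj: "\<forall>y\<in>S. \<forall>c\<in>A y. \<not> adj y x \<longrightarrow> (\<forall>c'\<in>A x. \<not> R c c')"
    and big: "q + card {y\<in>S. adj y x} \<le> card (A x)"
  shows "card (Fn A R S) * q \<le> card (Fn A R (insert x S))"
proof -
  define av where "av f = {c\<in>A x. \<forall>y\<in>S. \<not> R (f y) c}" for f
  have avq: "q \<le> card (av f)" if f: "f \<in> Fn A R S" for f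
  proof -
    have sub: "A x - av f \<subseteq> (\<Union>y\<in>{y\<in>S. adj y x}. {c'\<in>A x. R (f y) c'})"
      using f nadj unfolding av_def Fn_def by auto
    have "card (A x - av f) \<le> (\<Sum>y\<in>{y\<in>S. adj y x}. card {c'\<in>A x. R (f y) c'})"
    proof -
      have "finite (\<Union>y\<in>{y\<in>S. adj y x}. {c'\<in>A x. R (f y) c'})" using fin finA by auto
      then have "card (A x - av f) \<le> card (\<Union>y\<in>{y\<in>S. adj y x}. {c'\<in>A x. R (f y) c'})"
        using card_mono sub by blast
      also have "\<dots> \<le> (\<Sum>y\<in>{y\<in>S. adj y x}. card {c'\<in>A x. R (f y) c'})"
        by (rule card_UN_le) (use fin in auto)
      finally show ?thesis .
    qed
    also have "\<dots> \<le> (\<Sum>y\<in>{y\<in>S. adj y x}. 1)"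
      by (rule sum_mono) (use f one in \<open>auto simp: Fn_def\<close>)
    finally have "card (A x - av f) \<le> card {y\<in>S. adj y x}" by simp
    moreover have "av f \<subseteq> A x" by (auto simp: av_def)
    moreover have "finite (A x)" using finA by auto
    moreover have "finite (av f)" using \<open>finite (A x)\<close> by (auto simp: av_def)
    ultimately show ?thesis using big card_Diff_subset[of "av f" "A x"] card_mono[of "A x" "av f"]
      by linarith
  qed
  define g :: "('a \<Rightarrow> 'b) \<times> 'b \<Rightarrow> 'a \<Rightarrow> 'b" where "g = (\<lambda>(f, c). f(x := c))"
  have finF: "finite (Fn A R S)" using Fn_finite fin finA by auto
  have finF2: "finite (Fn A R (insert x S))" using Fn_finite[of "insert x S" A R] fin finA by auto
  have img: "g ` Sigma (Fn A R S) av \<subseteq> Fn A R (insert x S)"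
  proof
    fix h assume "h \<in> g ` Sigma (Fn A R S) av"
    then obtain f c where f: "f \<in> Fn A R S" and c: "c \<in> av f" and h: "h = f(x := c)"
      by (auto simp: g_def)
    show "h \<in> Fn A R (insert x S)"
      using f c xS symR irr unfolding h Fn_def av_def by auto
  qed
  have inj: "inj_on g (Sigma (Fn A R S) av)"
  proof (rule inj_onI, clarify)
    fix f c f' c' assume f: "f \<in> Fn A R S" "f' \<in> Fn A R S" and e: "g (f, c) = g (f', c')"
    have "c = c'" using fun_cong[OF e, of x] by (simp add: g_def)
    moreover have "f = f'"
    proof
      fix y show "f y = f' y"
        using fun_cong[OF e, of y] f xS by (cases "y = x") (auto simp: g_def Fn_def)
    qed
    ultimately show "f = f' \<and> c = c'" by simp
  qed
  have "card (Fn A R S) * q \<le> (\<Sum>f\<in>Fn A R S. card (av f))"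
    using sum_bounded_below[of "Fn A R S" q "\<lambda>f. card (av f)"] avq by auto
  also have "\<dots> = card (Sigma (Fn A R S) av)"
    by (rule card_SigmaI[symmetric]) (use finF finA in \<open>auto simp: av_def\<close>)
  also have "\<dots> = card (g ` Sigma (Fn A R S) av)" using card_image[OF inj] by simp
  also have "\<dots> \<le> card (Fn A R (insert x S))" using card_mono[OF finF2 img] .
  finally show ?thesis .
qed


lemma edge_img:
  assumes inj: "inj_on \<phi> HV" and sg: "simple_graph HV HE" and x: "x \<in> HV" and y: "y \<in> HV"
  shows "({\<phi> x, \<phi> y} \<in> (\<lambda>e. \<phi> ` e) ` HE) \<longleftrightarrow> {x, y} \<in> HE"
proof
  assume "{\<phi> x, \<phi> y} \<in> (\<lambda>e. \<phi> ` e) ` HE"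
  then obtain e where e: "e \<in> HE" "{\<phi> x, \<phi> y} = \<phi> ` e" by auto
  have "e \<subseteq> HV" using sg e(1) unfolding simple_graph_def by auto
  moreover have "\<phi> ` {x, y} = \<phi> ` e" using e(2) by simp
  ultimately have "{x, y} = e" using inj_on_image_eq_iff[OF inj] x y by blast
  then show "{x, y} \<in> HE" using e by simp
next
  assume "{x, y} \<in> HE"
  then show "{\<phi> x, \<phi> y} \<in> (\<lambda>e. \<phi> ` e) ` HE" by (metis image_empty image_insert image_eqI)
qed

lemma cover_sub: "is_cover V E L HV HE \<Longrightarrow> u \<in> V \<Longrightarrow> L u \<subseteq> HV"
  unfolding is_cover_def by auto

lemma cover_transfer:
  assumes cov: "is_cover V E L HV HE" and inj: "inj_on \<phi> HV"
  shows "is_cover V E (\<lambda>u. \<phi> ` L u) (\<phi> ` HV) ((\<lambda>e. \<phi> ` e) ` HE)"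
    and "P_DP_cover V (\<phi> ` HV) ((\<lambda>e. \<phi> ` e) ` HE) = P_DP_cover V HV HE"
proof -
  have sg: "simple_graph HV HE" using cov unfolding is_cover_def by auto
  have sub: "\<And>u. u \<in> V \<Longrightarrow> L u \<subseteq> HV" using cover_sub[OF cov] .
  note EI = edge_img[OF inj sg]
  have c1: "simple_graph (\<phi> ` HV) ((\<lambda>e. \<phi> ` e) ` HE)"
    unfolding simple_graph_def
  proof (intro conjI ballI)
    show "finite (\<phi> ` HV)" using sg unfolding simple_graph_def by auto
  next
    fix e2 assume "e2 \<in> (\<lambda>e. \<phi> ` e) ` HE"
    then obtain e where e: "e \<in> HE" "e2 = \<phi> ` e" by auto
    then obtain a b where ab: "e = {a, b}" "a \<noteq> b" "a \<in> HV" "b \<in> HV"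
      using sg unfolding simple_graph_def by blast
    have "\<phi> a \<noteq> \<phi> b" using inj ab unfolding inj_on_def by blast
    then show "\<exists>u v. e2 = {u, v} \<and> u \<noteq> v \<and> u \<in> \<phi> ` HV \<and> v \<in> \<phi> ` HV"
      using e ab by auto
  qed
  have c2: "(\<Union>u\<in>V. \<phi> ` L u) = \<phi> ` HV"
    using cov unfolding is_cover_def by auto
  have c3: "\<forall>u\<in>V. \<forall>v\<in>V. u \<noteq> v \<longrightarrow> \<phi> ` L u \<inter> \<phi> ` L v = {}"
  proof (intro ballI impI)
    fix u v assume uv: "u \<in> V" "v \<in> V" "u \<noteq> v"
    have "\<phi> ` L u \<inter> \<phi> ` L v = \<phi> ` (L u \<inter> L v)"
      using inj_on_image_Int[OF inj sub sub] uv by simp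
    then show "\<phi> ` L u \<inter> \<phi> ` L v = {}" using cov uv unfolding is_cover_def by auto
  qed
  have c4: "\<forall>u\<in>V. \<forall>x\<in>\<phi> ` L u. \<forall>y\<in>\<phi> ` L u. x \<noteq> y \<longrightarrow> {x, y} \<in> (\<lambda>e. \<phi> ` e) ` HE"
  proof (intro ballI impI)
    fix u x2 y2 assume u: "u \<in> V" and x2: "x2 \<in> \<phi> ` L u" and y2: "y2 \<in> \<phi> ` L u" and ne: "x2 \<noteq> y2"
    obtain x y where xy: "x \<in> L u" "y \<in> L u" "x2 = \<phi> x" "y2 = \<phi> y" using x2 y2 by auto
    have "x \<noteq> y" using ne xy by auto
    moreover have "\<forall>u\<in>V. \<forall>x\<in>L u. \<forall>y\<in>L u. x \<noteq> y \<longrightarrow> {x, y} \<in> HE" using cov unfolding is_cover_def by simp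
    ultimately have "{x, y} \<in> HE" using u xy by blast
    moreover have "x \<in> HV" "y \<in> HV" using sub u xy by auto
    ultimately show "{x2, y2} \<in> (\<lambda>e. \<phi> ` e) ` HE" using EI xy by simp
  qed
  have c5: "\<forall>u\<in>V. \<forall>v\<in>V. (\<exists>x\<in>\<phi> ` L u. \<exists>y\<in>\<phi> ` L v. {x, y} \<in> (\<lambda>e. \<phi> ` e) ` HE) \<longrightarrow> u = v \<or> {u, v} \<in> E"
  proof (intro ballI impI)
    fix u v assume u: "u \<in> V" and v: "v \<in> V" and "\<exists>x\<in>\<phi> ` L u. \<exists>y\<in>\<phi> ` L v. {x, y} \<in> (\<lambda>e. \<phi> ` e) ` HE"
    then obtain x y where xy: "x \<in> L u" "y \<in> L v" "{\<phi> x, \<phi> y} \<in> (\<lambda>e. \<phi> ` e) ` HE" by auto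
    then have "{x, y} \<in> HE" using EI sub u v by blast
    then show "u = v \<or> {u, v} \<in> E" using cov u v xy unfolding is_cover_def by blast
  qed
  have c6: "\<forall>u\<in>V. \<forall>v\<in>V. {u, v} \<in> E \<longrightarrow>
        (\<forall>x\<in>\<phi> ` L u. \<forall>y1\<in>\<phi> ` L v. \<forall>y2\<in>\<phi> ` L v. {x, y1} \<in> (\<lambda>e. \<phi> ` e) ` HE \<longrightarrow> {x, y2} \<in> (\<lambda>e. \<phi> ` e) ` HE \<longrightarrow> y1 = y2)"
  proof (intro ballI impI)
    fix u v x2 y12 y22 assume u: "u \<in> V" and v: "v \<in> V" and uv: "{u, v} \<in> E"
      and x2: "x2 \<in> \<phi> ` L u" and y12: "y12 \<in> \<phi> ` L v" and y22: "y22 \<in> \<phi> ` L v"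
      and e1: "{x2, y12} \<in> (\<lambda>e. \<phi> ` e) ` HE" and e2: "{x2, y22} \<in> (\<lambda>e. \<phi> ` e) ` HE"
    obtain x y1 y2 where xy: "x \<in> L u" "y1 \<in> L v" "y2 \<in> L v" "x2 = \<phi> x" "y12 = \<phi> y1" "y22 = \<phi> y2"
      using x2 y12 y22 by auto
    have "{x, y1} \<in> HE" "{x, y2} \<in> HE" using EI sub u v xy e1 e2 by blast+
    then have "y1 = y2" using cov u v uv xy unfolding is_cover_def by blast
    then show "y12 = y22" using xy by simp
  qed
  show "is_cover V E (\<lambda>u. \<phi> ` L u) (\<phi> ` HV) ((\<lambda>e. \<phi> ` e) ` HE)"
    unfolding is_cover_def using c1 c2 c3 c4 c5 c6 by blast
  define S1 where "S1 = {I. I \<subseteq> HV \<and> independent HE I \<and> card I = card V}"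
  define S2 where "S2 = {I. I \<subseteq> \<phi> ` HV \<and> independent ((\<lambda>e. \<phi> ` e) ` HE) I \<and> card I = card V}"
  have ind: "independent ((\<lambda>e. \<phi> ` e) ` HE) (\<phi> ` I) = independent HE I" if "I \<subseteq> HV" for I
  proof -
    have "\<forall>x\<in>I. \<forall>y\<in>I. ({\<phi> x, \<phi> y} \<in> (\<lambda>e. \<phi> ` e) ` HE) = ({x, y} \<in> HE)"
      using EI that by blast
    then show ?thesis unfolding independent_def by auto
  qed
  have crd: "card (\<phi> ` I) = card I" if "I \<subseteq> HV" for I
    using card_image inj that inj_on_subset by blast
  have "S2 = (\<lambda>I. \<phi> ` I) ` S1"
  proof
    show "S2 \<subseteq> (\<lambda>I. \<phi> ` I) ` S1"
    proof
      fix J assume J: "J \<in> S2"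
      then obtain I where I: "I \<subseteq> HV" "J = \<phi> ` I" unfolding S2_def by (auto simp: subset_image_iff)
      then show "J \<in> (\<lambda>I. \<phi> ` I) ` S1" using J ind crd unfolding S1_def S2_def by auto
    qed
  next
    show "(\<lambda>I. \<phi> ` I) ` S1 \<subseteq> S2" using ind crd unfolding S1_def S2_def by auto
  qed
  moreover have "inj_on (\<lambda>I. \<phi> ` I) S1"
    using inj_on_image_eq_iff[OF inj] unfolding S1_def inj_on_def by auto
  ultimately have "card S2 = card S1" by (simp add: card_image)
  then show "P_DP_cover V (\<phi> ` HV) ((\<lambda>e. \<phi> ` e) ` HE) = P_DP_cover V HV HE"
    unfolding P_DP_cover_def S1_def S2_def .
qed

lemma is_cover_cong: "(\<forall>u\<in>V. L u = L' u) \<Longrightarrow> is_cover V E L HV HE = is_cover V E L' HV HE"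
  unfolding is_cover_def by (simp cong: ball_cong)

lemma P_DP_le:
  assumes cov: "is_cover V E L HV HE" and mf: "m_fold V L k" and finV: "finite V"
  shows "P_DP V E k \<le> P_DP_cover V HV HE"
proof -
  have "\<forall>u\<in>V. \<exists>g. bij_betw g (L u) {..<k}"
    using mf finite_same_card_bij[of _ "{..<k}"] unfolding m_fold_def by auto
  then obtain G where G: "\<forall>u\<in>V. bij_betw (G u) (L u) {..<k}" by metis
  define own where "own b = (SOME u. u \<in> V \<and> b \<in> L u)" for b
  have disj: "\<forall>u\<in>V. \<forall>v\<in>V. u \<noteq> v \<longrightarrow> L u \<inter> L v = {}" using cov unfolding is_cover_def by simp
  have own: "own b = u" if "u \<in> V" "b \<in> L u" for u b
  proof -
    have "own b \<in> V \<and> b \<in> L (own b)" unfolding own_def by (rule someI[of _ u]) (use that in auto)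
    then show ?thesis using disj that by blast
  qed
  define \<phi> where "\<phi> b = (own b, G (own b) b)" for b
  have HV: "HV = (\<Union>u\<in>V. L u)" using cov unfolding is_cover_def by auto
  have inj: "inj_on \<phi> HV"
  proof (rule inj_onI)
    fix x y assume x: "x \<in> HV" and y: "y \<in> HV" and e: "\<phi> x = \<phi> y"
    obtain u where u: "u \<in> V" "x \<in> L u" using x HV by auto
    obtain v where v: "v \<in> V" "y \<in> L v" using y HV by auto
    have "u = v" using e own u v unfolding \<phi>_def by auto
    then have "G u x = G u y" using e own u v unfolding \<phi>_def by auto
    then show "x = y" using G u v \<open>u = v\<close> unfolding bij_betw_def inj_on_def by blast
  qed
  have Lu: "\<phi> ` L u = {u} \<times> {..<k}" if "u \<in> V" for u
  proof -
    have "\<phi> ` L u = (\<lambda>b. (u, G u b)) ` L u" using own that unfolding \<phi>_def by auto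
    also have "\<dots> = {u} \<times> G u ` L u" by auto
    also have "\<dots> = {u} \<times> {..<k}" using G that unfolding bij_betw_def by auto
    finally show ?thesis .
  qed
  have HV2: "\<phi> ` HV = V \<times> {..<k}"
  proof -
    have "\<phi> ` HV = (\<Union>u\<in>V. \<phi> ` L u)" using HV by (simp add: image_UN)
    also have "\<dots> = (\<Union>u\<in>V. {u} \<times> {..<k})" using Lu by simp
    also have "\<dots> = V \<times> {..<k}" by blast
    finally show ?thesis .
  qed
  define HE2 where "HE2 = (\<lambda>e. \<phi> ` e) ` HE"
  have cov2: "is_cover V E (\<lambda>u. {u} \<times> {..<k}) (V \<times> {..<k}) HE2"
    using cover_transfer(1)[OF cov inj] is_cover_cong[of V "\<lambda>u. \<phi> ` L u" "\<lambda>u. {u} \<times> {..<k}"] Lu HV2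
    unfolding HE2_def by auto
  have eq: "P_DP_cover V (V \<times> {..<k}) HE2 = P_DP_cover V HV HE"
    using cover_transfer(2)[OF cov inj] HV2 unfolding HE2_def by simp
  have fin: "finite {HE. is_cover V E (\<lambda>u. {u} \<times> {..<k}) (V \<times> {..<k}) HE}"
  proof (rule finite_subset)
    show "{HE. is_cover V E (\<lambda>u. {u} \<times> {..<k}) (V \<times> {..<k}) HE} \<subseteq> Pow (Pow (V \<times> {..<k}))"
    proof
      fix X assume "X \<in> {HE. is_cover V E (\<lambda>u. {u} \<times> {..<k}) (V \<times> {..<k}) HE}"
      then have "simple_graph (V \<times> {..<k}) X" unfolding is_cover_def by simp
      then show "X \<in> Pow (Pow (V \<times> {..<k}))" unfolding simple_graph_def by fastforce
    qed
    show "finite (Pow (Pow (V \<times> {..<k})))" using finV by simp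
  qed
  have "P_DP V E k \<le> P_DP_cover V (V \<times> {..<k}) HE2"
    unfolding P_DP_def by (rule Min_le) (use fin cov2 in auto)
  then show ?thesis using eq by simp
qed




locale S17 =
  fixes V :: "'a set" and E :: "'a set set" and w :: 'a
    and L :: "'a \<Rightarrow> 'b set" and HV :: "'b set" and HE :: "'b set set" and m :: nat
  assumes G: "simple_graph V E"
    and w_new: "w \<notin> V"
    and cover: "is_cover (join_V w V) (join_E w V E) L HV HE"
    and mfold: "m_fold (join_V w V) L m"
    and perfect: "\<forall>u\<in>join_V w V. \<forall>v\<in>join_V w V. {u, v} \<in> join_E w V E \<longrightarrow>
                    perfect_matching_between HE (L u) (L v)"
begin

lemma finV: "finite V" using G unfolding simple_graph_def by simp

lemma sgH: "simple_graph HV HE" using cover unfolding is_cover_def by simp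
lemma finHV: "finite HV" using sgH unfolding simple_graph_def by simp
lemma HVeq: "HV = (\<Union>u\<in>insert w V. L u)" using cover unfolding is_cover_def join_V_def by simp
lemma disj0: "\<forall>u\<in>insert w V. \<forall>v\<in>insert w V. u \<noteq> v \<longrightarrow> L u \<inter> L v = {}"
  using cover unfolding is_cover_def join_V_def by simp
lemma disj: "u \<in> insert w V \<Longrightarrow> v \<in> insert w V \<Longrightarrow> u \<noteq> v \<Longrightarrow> L u \<inter> L v = {}"
  using disj0 by blast
lemma own_uniq: "u \<in> insert w V \<Longrightarrow> v \<in> insert w V \<Longrightarrow> x \<in> L u \<Longrightarrow> x \<in> L v \<Longrightarrow> u = v"
  using disj by blast
lemma cliq0: "\<forall>u\<in>insert w V. \<forall>x\<in>L u. \<forall>y\<in>L u. x \<noteq> y \<longrightarrow> {x, y} \<in> HE"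
  using cover unfolding is_cover_def join_V_def by simp
lemma cliq: "u \<in> insert w V \<Longrightarrow> x \<in> L u \<Longrightarrow> y \<in> L u \<Longrightarrow> x \<noteq> y \<Longrightarrow> {x, y} \<in> HE"
  using cliq0 by blast
lemmas covp = cover[unfolded is_cover_def]
lemmas c3_0 = covp[THEN conjunct2, THEN conjunct2, THEN conjunct2, THEN conjunct2, THEN conjunct1]
lemmas c4_0 = covp[THEN conjunct2, THEN conjunct2, THEN conjunct2, THEN conjunct2, THEN conjunct2]
lemma c3: "u \<in> insert w V \<Longrightarrow> v \<in> insert w V \<Longrightarrow> x \<in> L u \<Longrightarrow> y \<in> L v \<Longrightarrow> {x, y} \<in> HE
    \<Longrightarrow> u = v \<or> {u, v} \<in> join_E w V E"
  using c3_0 unfolding join_V_def by blast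
lemma c4: "u \<in> insert w V \<Longrightarrow> v \<in> insert w V \<Longrightarrow> {u, v} \<in> join_E w V E \<Longrightarrow> x \<in> L u \<Longrightarrow>
   y1 \<in> L v \<Longrightarrow> y2 \<in> L v \<Longrightarrow> {x, y1} \<in> HE \<Longrightarrow> {x, y2} \<in> HE \<Longrightarrow> y1 = y2"
  using c4_0 unfolding join_V_def by blast
lemma finL: "u \<in> insert w V \<Longrightarrow> finite (L u)" using mfold unfolding m_fold_def join_V_def by auto
lemma cardL: "u \<in> insert w V \<Longrightarrow> card (L u) = m" using mfold unfolding m_fold_def join_V_def by auto
lemma noloop: "{x} \<notin> HE"
proof
  assume "{x} \<in> HE"
  then obtain a b where "{x} = {a, b}" "a \<noteq> b" using sgH unfolding simple_graph_def by blast
  then have "a \<in> {x}" "b \<in> {x}" by auto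
  then show False using \<open>a \<noteq> b\<close> by simp
qed
lemma edge_sym: "{x, y} = {y, x}" by (rule insert_commute)

lemma E_sub: "e \<in> E \<Longrightarrow> \<exists>x y. e = {x, y} \<and> x \<noteq> y \<and> x \<in> V \<and> y \<in> V"
  using G unfolding simple_graph_def by blast
lemma EM_V: "x \<in> V \<Longrightarrow> y \<in> V \<Longrightarrow> ({x, y} \<in> join_E w V E) = ({x, y} \<in> E)"
proof -
  assume xy: "x \<in> V" "y \<in> V"
  have "{x, y} \<notin> {{w, v} | v. v \<in> V}"
  proof
    assume "{x, y} \<in> {{w, v} | v. v \<in> V}"
    then obtain v where "{x, y} = {w, v}" by blast
    then have "w \<in> {x, y}" by simp
    then show False using xy w_new by auto
  qed
  then show ?thesis unfolding join_E_def by blast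
qed
lemma wv: "v \<in> V \<Longrightarrow> {w, v} \<in> join_E w V E" unfolding join_E_def by blast

lemma pm: "u \<in> insert w V \<Longrightarrow> v \<in> insert w V \<Longrightarrow> {u, v} \<in> join_E w V E \<Longrightarrow>
   perfect_matching_between HE (L u) (L v)"
  using perfect unfolding join_V_def by blast

lemma partner: "u \<in> insert w V \<Longrightarrow> v \<in> insert w V \<Longrightarrow> {u, v} \<in> join_E w V E \<Longrightarrow> x \<in> L u \<Longrightarrow>
   \<exists>!y. y \<in> L v \<and> {x, y} \<in> HE"
proof -
  assume a: "u \<in> insert w V" "v \<in> insert w V" "{u, v} \<in> join_E w V E" "x \<in> L u"
  have "\<forall>x\<in>L u. \<exists>!y. y \<in> L v \<and> {x, y} \<in> HE"
    using pm[OF a(1-3)] unfolding perfect_matching_between_def by (rule conjunct1)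
  then show ?thesis using a(4) by (rule bspec)
qed

definition nb :: "'b \<Rightarrow> 'a \<Rightarrow> 'b" where "nb t v = (THE y. y \<in> L v \<and> {t, y} \<in> HE)"

lemma nb: assumes "t \<in> L w" "v \<in> V" shows "nb t v \<in> L v" "{t, nb t v} \<in> HE"
  "\<And>y. y \<in> L v \<Longrightarrow> {t, y} \<in> HE \<Longrightarrow> y = nb t v"
proof -
  have "\<exists>!y. y \<in> L v \<and> {t, y} \<in> HE" using partner[of w v t] assms wv by blast
  then have "nb t v \<in> L v \<and> {t, nb t v} \<in> HE" unfolding nb_def by (rule theI')
  then show "nb t v \<in> L v" "{t, nb t v} \<in> HE" by auto
  show "\<And>y. y \<in> L v \<Longrightarrow> {t, y} \<in> HE \<Longrightarrow> y = nb t v"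
    using \<open>\<exists>!y. y \<in> L v \<and> {t, y} \<in> HE\<close> \<open>nb t v \<in> L v \<and> {t, nb t v} \<in> HE\<close> by blast
qed

definition Lt :: "'b \<Rightarrow> 'a \<Rightarrow> 'b set" where "Lt t v = L v - {z. {t, z} \<in> HE}"
definition HVt :: "'b \<Rightarrow> 'b set" where "HVt t = (\<Union>v\<in>V. Lt t v)"
definition HEt :: "'b \<Rightarrow> 'b set set" where "HEt t = {e \<in> HE. e \<subseteq> HVt t}"

lemma Lt_eq: "t \<in> L w \<Longrightarrow> v \<in> V \<Longrightarrow> Lt t v = L v - {nb t v}"
proof -
  assume a: "t \<in> L w" "v \<in> V"
  show ?thesis
  proof (rule set_eqI)
    fix z show "z \<in> Lt t v \<longleftrightarrow> z \<in> L v - {nb t v}"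
      using nb(2)[OF a] nb(3)[OF a, of z] unfolding Lt_def by auto
  qed
qed

lemma Lt_card: "t \<in> L w \<Longrightarrow> v \<in> V \<Longrightarrow> card (Lt t v) = m - 1"
  using Lt_eq nb(1) cardL finL by simp

lemma Lt_sub: "Lt t v \<subseteq> L v" unfolding Lt_def by auto

lemma HVt_sub: "HVt t \<subseteq> HV"
proof
  fix x assume "x \<in> HVt t"
  then obtain v where "v \<in> V" "x \<in> Lt t v" unfolding HVt_def by auto
  then have "x \<in> L v" using Lt_sub by auto
  then show "x \<in> HV" using HVeq \<open>v \<in> V\<close> by auto
qed

lemma covt: assumes t: "t \<in> L w" shows "is_cover V E (Lt t) (HVt t) (HEt t)"
proof -
  have s1: "simple_graph (HVt t) (HEt t)"
    unfolding simple_graph_def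
  proof (intro conjI ballI)
    show "finite (HVt t)" using HVt_sub finHV finite_subset by blast
  next
    fix e assume "e \<in> HEt t"
    then have e: "e \<in> HE" "e \<subseteq> HVt t" unfolding HEt_def by auto
    then obtain a b where "e = {a, b}" "a \<noteq> b" using sgH unfolding simple_graph_def by blast
    then show "\<exists>u v. e = {u, v} \<and> u \<noteq> v \<and> u \<in> HVt t \<and> v \<in> HVt t" using e by blast
  qed
  have s3: "\<forall>u\<in>V. \<forall>v\<in>V. u \<noteq> v \<longrightarrow> Lt t u \<inter> Lt t v = {}"
  proof (intro ballI impI)
    fix u v assume "u \<in> V" "v \<in> V" "u \<noteq> v"
    then have "L u \<inter> L v = {}" using disj[of u v] by simp
    then show "Lt t u \<inter> Lt t v = {}" using Lt_sub[of t u] Lt_sub[of t v] by blast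
  qed
  have s4: "\<forall>u\<in>V. \<forall>x\<in>Lt t u. \<forall>y\<in>Lt t u. x \<noteq> y \<longrightarrow> {x, y} \<in> HEt t"
  proof (intro ballI impI)
    fix u x y assume a: "u \<in> V" "x \<in> Lt t u" "y \<in> Lt t u" "x \<noteq> y"
    have "x \<in> L u" "y \<in> L u" using a Lt_sub by auto
    then have "{x, y} \<in> HE" using cliq[of u x y] a by auto
    moreover have "{x, y} \<subseteq> HVt t" using a unfolding HVt_def by auto
    ultimately show "{x, y} \<in> HEt t" unfolding HEt_def by auto
  qed
  have s5: "\<forall>u\<in>V. \<forall>v\<in>V. (\<exists>x\<in>Lt t u. \<exists>y\<in>Lt t v. {x, y} \<in> HEt t) \<longrightarrow> u = v \<or> {u, v} \<in> E"
  proof (intro ballI impI)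
    fix u v assume uv: "u \<in> V" "v \<in> V" and "\<exists>x\<in>Lt t u. \<exists>y\<in>Lt t v. {x, y} \<in> HEt t"
    then obtain x y where "x \<in> Lt t u" "y \<in> Lt t v" "{x, y} \<in> HEt t" by blast
    then have xy: "x \<in> L u" "y \<in> L v" "{x, y} \<in> HE" using Lt_sub unfolding HEt_def by auto
    have "u = v \<or> {u, v} \<in> join_E w V E" using c3[OF _ _ xy] uv by auto
    then show "u = v \<or> {u, v} \<in> E" using EM_V[OF uv] by auto
  qed
  have s6: "\<forall>u\<in>V. \<forall>v\<in>V. {u, v} \<in> E \<longrightarrow>
        (\<forall>x\<in>Lt t u. \<forall>y1\<in>Lt t v. \<forall>y2\<in>Lt t v. {x, y1} \<in> HEt t \<longrightarrow> {x, y2} \<in> HEt t \<longrightarrow> y1 = y2)"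
  proof (intro ballI impI)
    fix u v x y1 y2 assume a: "u \<in> V" "v \<in> V" "{u, v} \<in> E" "x \<in> Lt t u" "y1 \<in> Lt t v" "y2 \<in> Lt t v"
      "{x, y1} \<in> HEt t" "{x, y2} \<in> HEt t"
    have b: "x \<in> L u" "y1 \<in> L v" "y2 \<in> L v" "{x, y1} \<in> HE" "{x, y2} \<in> HE"
      using a Lt_sub unfolding HEt_def by auto
    have "{u, v} \<in> join_E w V E" using EM_V[of u v] a by auto
    then show "y1 = y2" using c4[of u v x y1 y2] a b by auto
  qed
  have s2: "(\<Union>v\<in>V. Lt t v) = HVt t" by (simp add: HVt_def)
  show ?thesis unfolding is_cover_def by (intro conjI s1 s2 s3 s4 s5 s6)
qed

lemma mft: "t \<in> L w \<Longrightarrow> m_fold V (Lt t) (m - 1)"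
proof -
  assume t: "t \<in> L w"
  show ?thesis unfolding m_fold_def
  proof
    fix u assume u: "u \<in> V"
    have "finite (L u)" using finL u by auto
    then have "finite (Lt t u)" using Lt_sub finite_subset by metis
    then show "finite (Lt t u) \<and> card (Lt t u) = m - 1" using Lt_card[OF t u] by auto
  qed
qed

lemma Pt_ge: "t \<in> L w \<Longrightarrow> P_DP V E (m - 1) \<le> P_DP_cover V (HVt t) (HEt t)"
  using P_DP_le[OF covt mft finV] by simp


lemma cardVM: "card (join_V w V) = Suc (card V)"
  unfolding join_V_def using finV w_new by simp

lemma Lw_sub: "L w \<subseteq> HV" using HVeq by auto

lemma owner: "x \<in> HV \<Longrightarrow> \<exists>u\<in>insert w V. x \<in> L u" using HVeq by auto

lemma HVt_elem: "x \<in> HVt t \<Longrightarrow> \<exists>v\<in>V. x \<in> Lt t v" unfolding HVt_def by auto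

lemma notin_HVt: "t \<in> L w \<Longrightarrow> t \<notin> HVt t'"
proof
  assume t: "t \<in> L w" and "t \<in> HVt t'"
  then obtain v where v: "v \<in> V" "t \<in> Lt t' v" using HVt_elem by blast
  then have "t \<in> L v" using Lt_sub by auto
  moreover have "w \<noteq> v" using v w_new by auto
  ultimately show False using disj[of w v] t v by auto
qed

lemma decomp: "P_DP_cover (join_V w V) HV HE = (\<Sum>t\<in>L w. P_DP_cover V (HVt t) (HEt t))"
proof -
  define C where "C = {I. I \<subseteq> HV \<and> independent HE I \<and> card I = card (join_V w V)}"
  define Ct where "Ct t = {I \<in> C. t \<in> I}" for t
  define Dt where "Dt t = {J. J \<subseteq> HVt t \<and> independent (HEt t) J \<and> card J = card V}" for t
  have meet: "\<exists>t\<in>L w. t \<in> I" if I: "I \<in> C" for I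
  proof (rule ccontr)
    assume nm: "\<not> (\<exists>t\<in>L w. t \<in> I)"
    define f where "f x = (SOME v. v \<in> V \<and> x \<in> L v)" for x
    have fx: "f x \<in> V \<and> x \<in> L (f x)" if x: "x \<in> I" for x
    proof -
      have "x \<in> HV" using I x unfolding C_def by auto
      then obtain u where u: "u \<in> insert w V" "x \<in> L u" using owner by blast
      have "u \<noteq> w" using u nm x by auto
      then have "u \<in> V \<and> x \<in> L u" using u by auto
      then show ?thesis unfolding f_def by (rule someI)
    qed
    have inj: "inj_on f I"
    proof (rule inj_onI)
      fix x y assume x: "x \<in> I" and y: "y \<in> I" and e: "f x = f y"
      show "x = y"
      proof (rule ccontr)
        assume "x \<noteq> y"
        then have "{x, y} \<in> HE" using cliq[of "f x" x y] fx[OF x] fx[OF y] e by auto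
        then show False using I x y unfolding C_def independent_def by auto
      qed
    qed
    have "card I \<le> card V" by (rule card_inj_on_le[OF inj _ finV]) (use fx in auto)
    then show False using I cardVM unfolding C_def by auto
  qed
  have Cunion: "C = (\<Union>t\<in>L w. Ct t)" using meet unfolding Ct_def by auto
  have finC: "finite C"
  proof (rule finite_subset)
    show "C \<subseteq> Pow HV" unfolding C_def by auto
    show "finite (Pow HV)" using finHV by simp
  qed
  have disjC: "\<forall>t\<in>L w. \<forall>t'\<in>L w. t \<noteq> t' \<longrightarrow> Ct t \<inter> Ct t' = {}"
  proof (intro ballI impI)
    fix t t' assume t: "t \<in> L w" "t' \<in> L w" "t \<noteq> t'"
    show "Ct t \<inter> Ct t' = {}"
    proof (rule ccontr)
      assume "Ct t \<inter> Ct t' \<noteq> {}"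
      then obtain I where I: "I \<in> C" "t \<in> I" "t' \<in> I" unfolding Ct_def by auto
      have "{t, t'} \<in> HE" using cliq[of w t t'] t by auto
      then show False using I unfolding C_def independent_def by auto
    qed
  qed
  have finLw: "finite (L w)" using finL by auto
  have "card C = (\<Sum>t\<in>L w. card (Ct t))"
    unfolding Cunion by (rule card_UN_disjoint[OF finLw _ disjC]) (use finC in \<open>auto simp: Ct_def\<close>)
  moreover have "card (Ct t) = card (Dt t)" if t: "t \<in> L w" for t
  proof -
    have tJ: "t \<notin> J" if "J \<in> Dt t" for J using notin_HVt[OF t] that unfolding Dt_def by auto
    have img: "Ct t = insert t ` Dt t"
    proof
      show "insert t ` Dt t \<subseteq> Ct t"
      proof
        fix I assume "I \<in> insert t ` Dt t"
        then obtain J where J: "J \<in> Dt t" "I = insert t J" by auto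
        have Jsub: "J \<subseteq> HVt t" and Jind: "independent (HEt t) J" and Jc: "card J = card V"
          using J unfolding Dt_def by auto
        have finJ: "finite J" using Jsub HVt_sub finHV finite_subset by metis
        have "I \<subseteq> HV" using J Jsub HVt_sub Lw_sub t by auto
        moreover have "card I = card (join_V w V)" using J(2) tJ[OF J(1)] finJ Jc cardVM by simp
        moreover have "independent HE I" unfolding independent_def
        proof (intro ballI)
          fix x y assume x: "x \<in> I" and y: "y \<in> I"
          have nt: "{t, z} \<notin> HE" if zJ: "z \<in> J" for z
          proof -
            have "z \<in> HVt t" using Jsub zJ by auto
            then obtain v where "v \<in> V" "z \<in> Lt t v" using HVt_elem by blast
            then show ?thesis unfolding Lt_def by auto
          qed
          show "{x, y} \<notin> HE"
          proof (cases "x = t")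
            case True
            then show ?thesis
            proof (cases "y = t")
              case True then show ?thesis using \<open>x = t\<close> noloop by simp
            next
              case False then show ?thesis using \<open>x = t\<close> nt y J(2) by auto
            qed
          next
            case False
            then have xJ: "x \<in> J" using x J(2) by auto
            show ?thesis
            proof (cases "y = t")
              case True then show ?thesis using nt[OF xJ] edge_sym[of x t] by simp
            next
              case False
              then have yJ: "y \<in> J" using y J(2) by auto
              show ?thesis
              proof
                assume "{x, y} \<in> HE"
                moreover have "{x, y} \<subseteq> HVt t" using xJ yJ Jsub by auto
                ultimately have "{x, y} \<in> HEt t" unfolding HEt_def by auto
                then show False using Jind xJ yJ unfolding independent_def by auto
              qed
            qed
          qed
        qed
        ultimately show "I \<in> Ct t" unfolding Ct_def C_def using J(2) by auto
      qed
    next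
      show "Ct t \<subseteq> insert t ` Dt t"
      proof
        fix I assume I: "I \<in> Ct t"
        then have IC: "I \<subseteq> HV" "independent HE I" "card I = card (join_V w V)" "t \<in> I"
          unfolding Ct_def C_def by auto
        have finI: "finite I" using IC(1) finHV finite_subset by metis
        have "I - {t} \<subseteq> HVt t"
        proof
          fix y assume y: "y \<in> I - {t}"
          then obtain u where u: "u \<in> insert w V" "y \<in> L u" using owner IC(1) by blast
          have ne: "{t, y} \<notin> HE" using IC(2,4) y unfolding independent_def by auto
          have "u \<noteq> w"
          proof
            assume "u = w"
            then have "{t, y} \<in> HE" using cliq[of w t y] t u y by auto
            then show False using ne by simp
          qed
          then have "u \<in> V" using u by auto
          moreover have "y \<in> Lt t u" using u ne unfolding Lt_def by auto
          ultimately show "y \<in> HVt t" unfolding HVt_def by auto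
        qed
        moreover have "independent (HEt t) (I - {t})"
          using IC(2) unfolding independent_def HEt_def by auto
        moreover have "card (I - {t}) = card V" using IC(3,4) finI cardVM by simp
        ultimately have "I - {t} \<in> Dt t" unfolding Dt_def by auto
        moreover have "I = insert t (I - {t})" using IC(4) by auto
        ultimately show "I \<in> insert t ` Dt t" by blast
      qed
    qed
    have "inj_on (insert t) (Dt t)"
    proof (rule inj_onI)
      fix J J' assume "J \<in> Dt t" "J' \<in> Dt t" "insert t J = insert t J'"
      then show "J = J'" using tJ by (metis Diff_insert_absorb)
    qed
    then show ?thesis using img card_image by metis
  qed
  ultimately have "card C = (\<Sum>t\<in>L w. card (Dt t))" by simp
  then show ?thesis unfolding P_DP_cover_def C_def Dt_def by simp
qed


lemma finHE: "finite HE"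
proof (rule finite_subset)
  show "HE \<subseteq> Pow HV" using sgH unfolding simple_graph_def by fastforce
  show "finite (Pow HV)" using finHV by simp
qed

lemma finE: "finite E"
proof (rule finite_subset)
  show "E \<subseteq> Pow V" using G unfolding simple_graph_def by fastforce
  show "finite (Pow V)" using finV by simp
qed

lemma aligned_level:
  assumes t: "t \<in> L w" and al: "\<forall>u\<in>V. \<forall>v\<in>V. {u, v} \<in> E \<longrightarrow> {nb t u, nb t v} \<in> HE"
  shows "level_vertex V E L HE m t"
proof -
  define X where "X = {e \<in> HE. \<exists>x\<in>V. \<exists>y\<in>V. x \<noteq> y \<and> (\<exists>a \<in> Lt t x. \<exists>b \<in> Lt t y. e = {a, b})}"
  have cnt: "cross_edges_count V L HE t = card X"
    unfolding cross_edges_count_def X_def Lt_def ..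
  define Se where "Se e = {f \<in> HE. \<exists>x\<in>V. \<exists>y\<in>V. x \<noteq> y \<and> e = {x, y} \<and> (\<exists>a \<in> Lt t x. \<exists>b \<in> Lt t y. f = {a, b})}" for e
  have XU: "X = (\<Union>e\<in>E. Se e)"
  proof
    show "X \<subseteq> (\<Union>e\<in>E. Se e)"
    proof
      fix f assume "f \<in> X"
      then obtain x y a b where f: "f \<in> HE" "x \<in> V" "y \<in> V" "x \<noteq> y" "a \<in> Lt t x" "b \<in> Lt t y" "f = {a, b}"
        unfolding X_def by blast
      have "a \<in> L x" "b \<in> L y" using f Lt_sub by auto
      then have "x = y \<or> {x, y} \<in> join_E w V E" using c3[of x y a b] f by auto
      then have "{x, y} \<in> E" using f EM_V[of x y] by auto
      moreover have "f \<in> Se {x, y}" unfolding Se_def using f by blast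
      ultimately show "f \<in> (\<Union>e\<in>E. Se e)" by blast
    qed
    show "(\<Union>e\<in>E. Se e) \<subseteq> X" unfolding X_def Se_def by blast
  qed
  have disjS: "\<forall>e\<in>E. \<forall>e'\<in>E. e \<noteq> e' \<longrightarrow> Se e \<inter> Se e' = {}"
  proof (intro ballI impI)
    fix e e' assume ee: "e \<in> E" "e' \<in> E" "e \<noteq> e'"
    show "Se e \<inter> Se e' = {}"
    proof (rule ccontr)
      assume "Se e \<inter> Se e' \<noteq> {}"
      then obtain f where "f \<in> Se e" "f \<in> Se e'" by blast
      then obtain x y a b x' y' a' b' where
        h: "x \<in> V" "y \<in> V" "e = {x, y}" "a \<in> Lt t x" "b \<in> Lt t y" "f = {a, b}"
           "x' \<in> V" "y' \<in> V" "e' = {x', y'}" "a' \<in> Lt t x'" "b' \<in> Lt t y'" "f = {a', b'}"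
        unfolding Se_def by blast
      have l: "a \<in> L x" "b \<in> L y" "a' \<in> L x'" "b' \<in> L y'" using h Lt_sub by auto
      have "(a = a' \<and> b = b') \<or> (a = b' \<and> b = a')" using h(6,12) by (auto simp: doubleton_eq_iff)
      then show False
      proof
        assume "a = a' \<and> b = b'"
        then have "x = x'" "y = y'" using own_uniq l h by auto
        then show False using h ee by simp
      next
        assume "a = b' \<and> b = a'"
        then have "x = y'" "y = x'" using own_uniq l h by auto
        then show False using h ee by (simp add: insert_commute)
      qed
    qed
  qed
  have cardS: "card (Se e) = m - 1" if e: "e \<in> E" for e
  proof -
    obtain x y where xy: "e = {x, y}" "x \<noteq> y" "x \<in> V" "y \<in> V" using E_sub[OF e] by blast
    have exy: "{x, y} \<in> join_E w V E" "{y, x} \<in> join_E w V E" using xy e EM_V by (auto simp: insert_commute)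
    define p where "p a = (THE b. b \<in> L y \<and> {a, b} \<in> HE)" for a
    have p: "p a \<in> L y \<and> {a, p a} \<in> HE" "\<And>b. b \<in> L y \<Longrightarrow> {a, b} \<in> HE \<Longrightarrow> b = p a" if a: "a \<in> L x" for a
    proof -
      have ex: "\<exists>!b. b \<in> L y \<and> {a, b} \<in> HE" using partner[of x y a] xy exy a by auto
      show "p a \<in> L y \<and> {a, p a} \<in> HE" unfolding p_def using theI'[OF ex] .
      show "\<And>b. b \<in> L y \<Longrightarrow> {a, b} \<in> HE \<Longrightarrow> b = p a"
        using ex \<open>p a \<in> L y \<and> {a, p a} \<in> HE\<close> by blast
    qed
    have pLt: "p a \<in> Lt t y" if a: "a \<in> Lt t x" for a
    proof -
      have aL: "a \<in> L x" using a Lt_sub by auto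
      have "p a \<noteq> nb t y"
      proof
        assume eq: "p a = nb t y"
        have ex: "\<exists>!z. z \<in> L x \<and> {nb t y, z} \<in> HE" using partner[of y x "nb t y"] xy exy nb(1)[OF t, of y] by auto
        have "{nb t y, a} \<in> HE" using p(1)[OF aL] eq by (simp add: insert_commute)
        moreover have "{nb t y, nb t x} \<in> HE" using al xy e by (simp add: insert_commute)
        moreover have "nb t x \<in> L x" using nb(1)[OF t] xy by auto
        ultimately have "a = nb t x" using ex aL by blast
        then show False using a Lt_eq[OF t] xy by auto
      qed
      then show ?thesis using p(1)[OF aL] Lt_eq[OF t] xy by auto
    qed
    have img: "Se e = (\<lambda>a. {a, p a}) ` Lt t x"
    proof
      show "(\<lambda>a. {a, p a}) ` Lt t x \<subseteq> Se e"
      proof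
        fix f assume "f \<in> (\<lambda>a. {a, p a}) ` Lt t x"
        then obtain a where a: "a \<in> Lt t x" "f = {a, p a}" by auto
        have "{a, p a} \<in> HE" using p(1) a Lt_sub by blast
        then show "f \<in> Se e" unfolding Se_def using a xy pLt[OF a(1)] by blast
      qed
      show "Se e \<subseteq> (\<lambda>a. {a, p a}) ` Lt t x"
      proof
        fix f assume "f \<in> Se e"
        then obtain x' y' a b where h: "f \<in> HE" "x' \<in> V" "y' \<in> V" "x' \<noteq> y'" "e = {x', y'}"
          "a \<in> Lt t x'" "b \<in> Lt t y'" "f = {a, b}" unfolding Se_def by blast
        have "(x = x' \<and> y = y') \<or> (x = y' \<and> y = x')" using h(5) xy(1) by (simp add: doubleton_eq_iff)
        then show "f \<in> (\<lambda>a. {a, p a}) ` Lt t x"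
        proof
          assume "x = x' \<and> y = y'"
          then have "a \<in> Lt t x" "b \<in> L y" using h Lt_sub by auto
          moreover have "b = p a" using p(2)[of a b] calculation h Lt_sub by blast
          ultimately show ?thesis using h by auto
        next
          assume "x = y' \<and> y = x'"
          then have "b \<in> Lt t x" "a \<in> L y" using h Lt_sub by auto
          moreover have "{b, a} \<in> HE" using h by (simp add: insert_commute)
          moreover have "a = p b" using p(2)[of b a] calculation Lt_sub by blast
          ultimately show ?thesis using h by (auto simp: insert_commute)
        qed
      qed
    qed
    have "inj_on (\<lambda>a. {a, p a}) (Lt t x)"
    proof (rule inj_onI)
      fix a a' assume a: "a \<in> Lt t x" "a' \<in> Lt t x" "{a, p a} = {a', p a'}"
      have aL: "a \<in> L x" "a' \<in> L x" using a Lt_sub by auto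
      have "(a = a' \<and> p a = p a') \<or> (a = p a' \<and> p a = a')" using a(3) by (simp add: doubleton_eq_iff)
      then show "a = a'"
      proof
        assume "a = p a' \<and> p a = a'"
        then have "a \<in> L y" using p(1)[OF aL(2)] by simp
        then show ?thesis using own_uniq[of x y a] aL xy by auto
      qed simp
    qed
    then have "card (Se e) = card (Lt t x)" using img card_image by metis
    then show ?thesis using Lt_card[OF t] xy by simp
  qed
  have "card X = (\<Sum>e\<in>E. card (Se e))"
    unfolding XU by (rule card_UN_disjoint[OF finE _ disjS]) (use finHE in \<open>auto simp: Se_def\<close>)
  also have "\<dots> = card E * (m - 1)" using cardS by simp
  finally show ?thesis unfolding level_vertex_def cnt .
qed


lemma order_exists:
  "\<exists>xs. distinct xs \<and> set xs = V \<and> (\<forall>i<length xs. card {j. j < i \<and> {xs ! j, xs ! i} \<in> E} + 1 \<le> col V E)"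
proof -
  obtain xs0 where xs0: "distinct xs0" "set xs0 = V" using finite_distinct_list[OF finV] by blast
  have "\<forall>i<length xs0. card {j. j < i \<and> {xs0 ! j, xs0 ! i} \<in> E} + 1 \<le> length xs0 + 1"
  proof (intro allI impI)
    fix i assume i: "i < length xs0"
    have "card {j. j < i \<and> {xs0 ! j, xs0 ! i} \<in> E} \<le> card {..<i}"
      by (rule card_mono) auto
    then show "card {j. j < i \<and> {xs0 ! j, xs0 ! i} \<in> E} + 1 \<le> length xs0 + 1" using i by simp
  qed
  then have "\<exists>d. \<exists>xs. distinct xs \<and> set xs = V \<and> (\<forall>i<length xs. card {j. j < i \<and> {xs ! j, xs ! i} \<in> E} + 1 \<le> d)"
    using xs0 by blast
  then show ?thesis unfolding col_def by (rule LeastI_ex)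
qed

lemma greedy_count:
  assumes t: "t \<in> L w" and u: "u \<in> V" and v: "v \<in> V" and uv: "u \<noteq> v"
    and a: "a \<in> Lt t u" and b: "b \<in> Lt t v" and nab: "{a, b} \<notin> HE"
    and mge: "m \<ge> col V E + 3"
  shows "(m - col V E - 2) ^ (card V - 2) \<le>
     card {J. J \<subseteq> HVt t \<and> independent (HEt t) J \<and> card J = card V \<and> a \<in> J \<and> b \<in> J}"
proof -
  define D where "D = col V E"
  define q where "q = m - D - 2"
  define A where "A z = (if z = u then {a} else if z = v then {b} else Lt t z)" for z
  define R where "R p q = ({p, q} \<in> HE)" for p q
  have AL: "A z \<subseteq> L z" for z using a b Lt_sub unfolding A_def by auto
  have ALt: "A z \<subseteq> Lt t z" for z using a b unfolding A_def by auto
  have finA: "finite (A z)" if "z \<in> V" for z using AL finL that finite_subset by (metis insertCI)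
  have symR: "\<forall>p q. R p q = R q p" unfolding R_def by (simp add: insert_commute)
  have irr: "\<forall>p. \<not> R p p" unfolding R_def using noloop by simp
  obtain xs where xs: "distinct xs" "set xs = V"
    and deg: "\<forall>i<length xs. card {j. j < i \<and> {xs ! j, xs ! i} \<in> E} + 1 \<le> D"
    using order_exists unfolding D_def by blast
  have IH: "card (Fn A R {u, v}) * q ^ card (set (take k xs) - {u, v}) \<le> card (Fn A R ({u, v} \<union> set (take k xs)))"
    if "k \<le> length xs" for k
    using that
  proof (induction k)
    case 0
    then show ?case by simp
  next
    case (Suc k)
    then have k: "k < length xs" by simp
    define x where "x = xs ! k"
    have tk: "take (Suc k) xs = take k xs @ [x]" unfolding x_def using k by (simp add: take_Suc_conv_app_nth)
    have "distinct (take (Suc k) xs)" using xs(1) by simp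
    then have xnot: "x \<notin> set (take k xs)" using tk by simp
    have xV: "x \<in> V" using xs(2) k unfolding x_def by auto
    define S where "S = {u, v} \<union> set (take k xs)"
    have IH': "card (Fn A R {u, v}) * q ^ card (set (take k xs) - {u, v}) \<le> card (Fn A R S)"
      using Suc k unfolding S_def by simp
    show ?case
    proof (cases "x \<in> {u, v}")
      case True
      then have "set (take (Suc k) xs) - {u, v} = set (take k xs) - {u, v}"
        "{u, v} \<union> set (take (Suc k) xs) = S" using tk unfolding S_def by auto
      then show ?thesis using IH' by simp
    next
      case False
      have SV: "S \<subseteq> V" unfolding S_def using u v xs(2) set_take_subset[of k xs] by auto
      have xS: "x \<notin> S" using False xnot unfolding S_def by auto
      have one: "\<forall>y\<in>S. \<forall>c\<in>A y. card {c'\<in>A x. R c c'} \<le> 1"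
      proof (intro ballI)
        fix y c assume y: "y \<in> S" and c: "c \<in> A y"
        have yV: "y \<in> V" using y SV by auto
        have fin: "finite {c'\<in>A x. R c c'}" using finA[OF xV] by simp
        have "\<forall>c1\<in>{c'\<in>A x. R c c'}. \<forall>c2\<in>{c'\<in>A x. R c c'}. c1 = c2"
        proof (intro ballI)
          fix c1 c2 assume c1: "c1 \<in> {c'\<in>A x. R c c'}" and c2: "c2 \<in> {c'\<in>A x. R c c'}"
          have h: "c \<in> L y" "c1 \<in> L x" "c2 \<in> L x" "{c, c1} \<in> HE" "{c, c2} \<in> HE"
            using c c1 c2 AL unfolding R_def by auto
          have "y \<noteq> x" using y xS by auto
          then have "{y, x} \<in> join_E w V E" using c3[of y x c c1] h yV xV by auto
          then show "c1 = c2" using c4[of y x c c1 c2] h yV xV by auto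
        qed
        then show "card {c'\<in>A x. R c c'} \<le> 1" using card_le_Suc0_iff_eq[OF fin] by simp
      qed
      have nadj: "\<forall>y\<in>S. \<forall>c\<in>A y. \<not> {y, x} \<in> E \<longrightarrow> (\<forall>c'\<in>A x. \<not> R c c')"
      proof (intro ballI impI)
        fix y c c' assume y: "y \<in> S" and c: "c \<in> A y" and ne: "{y, x} \<notin> E" and c': "c' \<in> A x"
        have yV: "y \<in> V" using y SV by auto
        show "\<not> R c c'"
        proof
          assume "R c c'"
          then have h: "c \<in> L y" "c' \<in> L x" "{c, c'} \<in> HE" using c c' AL unfolding R_def by auto
          have "y \<noteq> x" using y xS by auto
          then have "{y, x} \<in> join_E w V E" using c3[of y x c c'] h yV xV by auto
          then show False using ne EM_V yV xV by auto
        qed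
      qed
      have big: "q + card {y\<in>S. {y, x} \<in> E} \<le> card (A x)"
      proof -
        have Ax: "card (A x) = m - 1" using False Lt_card[OF t xV] unfolding A_def by auto
        have sub1: "{y\<in>set (take k xs). {y, x} \<in> E} \<subseteq> (\<lambda>j. xs ! j) ` {j. j < k \<and> {xs ! j, xs ! k} \<in> E}"
        proof
          fix y assume y: "y \<in> {y\<in>set (take k xs). {y, x} \<in> E}"
          then obtain j where j: "j < length (take k xs)" "take k xs ! j = y" by (auto simp: in_set_conv_nth)
          then have "j < k" "xs ! j = y" using k by auto
          then show "y \<in> (\<lambda>j. xs ! j) ` {j. j < k \<and> {xs ! j, xs ! k} \<in> E}" using y unfolding x_def by auto
        qed
        have "card {y\<in>set (take k xs). {y, x} \<in> E} \<le> card ((\<lambda>j. xs ! j) ` {j. j < k \<and> {xs ! j, xs ! k} \<in> E})"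
          by (rule card_mono[OF _ sub1]) simp
        also have "\<dots> \<le> card {j. j < k \<and> {xs ! j, xs ! k} \<in> E}" by (rule card_image_le) simp
        finally have c1: "card {y\<in>set (take k xs). {y, x} \<in> E} + 1 \<le> D" using deg k by fastforce
        have "{y\<in>S. {y, x} \<in> E} \<subseteq> {u, v} \<union> {y\<in>set (take k xs). {y, x} \<in> E}" unfolding S_def by auto
        then have "card {y\<in>S. {y, x} \<in> E} \<le> card ({u, v} \<union> {y\<in>set (take k xs). {y, x} \<in> E})"
          by (rule card_mono[rotated]) simp
        also have "\<dots> \<le> card {u, v} + card {y\<in>set (take k xs). {y, x} \<in> E}" by (rule card_Un_le)
        also have "\<dots> \<le> 2 + card {y\<in>set (take k xs). {y, x} \<in> E}" using card_insert_if[of "{v}" u] by auto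
        finally have "card {y\<in>S. {y, x} \<in> E} \<le> D + 1" using c1 by simp
        then show ?thesis using Ax mge unfolding q_def D_def by simp
      qed
      have finS: "finite S" unfolding S_def by simp
      have finA': "\<forall>y\<in>insert x S. finite (A y)" using finA SV xV by auto
      have step: "card (Fn A R S) * q \<le> card (Fn A R (insert x S))"
        by (rule greedy_step[where adj="\<lambda>y x. {y, x} \<in> E", OF finS finA' xS symR irr one nadj big])
      have eqS: "{u, v} \<union> set (take (Suc k) xs) = insert x S" using tk unfolding S_def by auto
      have "set (take (Suc k) xs) - {u, v} = insert x (set (take k xs) - {u, v})" using tk False by auto
      then have ce: "card (set (take (Suc k) xs) - {u, v}) = Suc (card (set (take k xs) - {u, v}))"
        using xnot by simp
      have "card (Fn A R {u, v}) * q ^ card (set (take (Suc k) xs) - {u, v})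
          = (card (Fn A R {u, v}) * q ^ card (set (take k xs) - {u, v})) * q" using ce by simp
      also have "\<dots> \<le> card (Fn A R S) * q" using IH' by (rule mult_right_mono) simp
      also have "\<dots> \<le> card (Fn A R (insert x S))" by (rule step)
      finally show ?thesis using eqS by simp
    qed
  qed
  from IH[of "length xs"] have main: "card (Fn A R {u, v}) * q ^ card (V - {u, v}) \<le> card (Fn A R V)"
    using xs(2) u v by (simp add: insert_absorb)
  define f0 where "f0 = (\<lambda>_. undefined)(u := a, v := b)"
  have "f0 \<in> Fn A R {u, v}"
    unfolding Fn_def f0_def A_def R_def using uv nab noloop by (auto simp: insert_commute)
  moreover have "finite (Fn A R {u, v})" using Fn_finite[of "{u, v}" A R] finA u v by auto
  ultimately have "card (Fn A R {u, v}) \<ge> 1"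
    by (metis One_nat_def Suc_leI card_gt_0_iff empty_iff)
  moreover have "card (V - {u, v}) = card V - 2" using u v uv finV by (simp add: card_Diff_subset)
  ultimately have q1: "q ^ (card V - 2) \<le> card (Fn A R V)"
  proof -
    assume c1: "card (Fn A R {u, v}) \<ge> 1" and ce: "card (V - {u, v}) = card V - 2"
    have "q ^ (card V - 2) = 1 * q ^ (card V - 2)" by simp
    also have "\<dots> \<le> card (Fn A R {u, v}) * q ^ (card V - 2)" using c1 by (rule mult_right_mono) simp
    also have "\<dots> \<le> card (Fn A R V)" using main ce by simp
    finally show ?thesis .
  qed
  define Dab where "Dab = {J. J \<subseteq> HVt t \<and> independent (HEt t) J \<and> card J = card V \<and> a \<in> J \<and> b \<in> J}"
  have finDab: "finite Dab"
  proof (rule finite_subset)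
    show "Dab \<subseteq> Pow HV" unfolding Dab_def using HVt_sub by auto
    show "finite (Pow HV)" using finHV by simp
  qed
  have maps: "(\<lambda>f. f ` V) ` Fn A R V \<subseteq> Dab"
  proof
    fix J assume "J \<in> (\<lambda>f. f ` V) ` Fn A R V"
    then obtain f where f: "f \<in> Fn A R V" "J = f ` V" by auto
    have fA: "\<And>y. y \<in> V \<Longrightarrow> f y \<in> A y" and fR: "\<And>y z. y \<in> V \<Longrightarrow> z \<in> V \<Longrightarrow> \<not> R (f y) (f z)"
      using f(1) unfolding Fn_def by auto
    have "J \<subseteq> HVt t" using f(2) fA ALt unfolding HVt_def by blast
    moreover have "independent (HEt t) J"
      unfolding independent_def HEt_def R_def using f(2) fR unfolding R_def by auto
    moreover have "inj_on f V"
    proof (rule inj_onI)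
      fix y z assume "y \<in> V" "z \<in> V" "f y = f z"
      then show "y = z" using fA AL own_uniq[of y z "f y"] by (metis insertCI subsetD)
    qed
    then have "card J = card V" using f(2) card_image by metis
    moreover have "f u = a" "f v = b" using fA[OF u] fA[OF v] uv unfolding A_def by auto
    then have "a \<in> J" "b \<in> J" using f(2) u v by auto
    ultimately show "J \<in> Dab" unfolding Dab_def by auto
  qed
  have inj: "inj_on (\<lambda>f. f ` V) (Fn A R V)"
  proof (rule inj_onI)
    fix f g assume f: "f \<in> Fn A R V" and g: "g \<in> Fn A R V" and e: "f ` V = g ` V"
    show "f = g"
    proof
      fix y show "f y = g y"
      proof (cases "y \<in> V")
        case True
        have "f y \<in> g ` V" using e True by auto
        then obtain z where z: "z \<in> V" "f y = g z" by auto
        have "f y \<in> A y" "g z \<in> A z" using f g True z unfolding Fn_def by auto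
        then have "f y \<in> L y" "g z \<in> L z" using AL by auto
        then have "y = z" using own_uniq[of y z "f y"] True z by auto
        then show ?thesis using z by simp
      next
        case False then show ?thesis using f g unfolding Fn_def by auto
      qed
    qed
  qed
  have "card (Fn A R V) \<le> card Dab" using card_inj_on_le[OF inj maps finDab] .
  then show ?thesis using q1 unfolding Dab_def q_def D_def by simp
qed


lemma indep_insert: "independent (insert {a, b} H) J \<longleftrightarrow> independent H J \<and> \<not> (a \<in> J \<and> b \<in> J)"
  unfolding independent_def by (auto simp: doubleton_eq_iff)

lemma nonlevel_bound:
  assumes t: "t \<in> L w" and nl: "\<not> level_vertex V E L HE m t" and mge: "m \<ge> col V E + 3"
  shows "P_DP V E (m - 1) + (m - col V E - 2) ^ (card V - 2) \<le> P_DP_cover V (HVt t) (HEt t)"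
proof -
  obtain u v where u: "u \<in> V" and v: "v \<in> V" and uvE: "{u, v} \<in> E" and nn: "{nb t u, nb t v} \<notin> HE"
    using aligned_level[OF t] nl by blast
  have uv: "u \<noteq> v"
  proof
    assume "u = v"
    then have "{u} \<in> E" using uvE by simp
    then obtain x y where "{u} = {x, y}" "x \<noteq> y" using E_sub by blast
    then have "x \<in> {u}" "y \<in> {u}" by auto
    then show False using \<open>x \<noteq> y\<close> by simp
  qed
  have exy: "{u, v} \<in> join_E w V E" "{v, u} \<in> join_E w V E" using uvE u v EM_V by (auto simp: insert_commute)
  have nu: "nb t u \<in> L u" "{t, nb t u} \<in> HE" using nb(1,2)[OF t u] by auto
  have nv: "nb t v \<in> L v" "{t, nb t v} \<in> HE" using nb(1,2)[OF t v] by auto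
  have "\<exists>!a. a \<in> L u \<and> {nb t v, a} \<in> HE"
    by (rule partner[OF insertI2[OF v] insertI2[OF u] exy(2) nv(1)])
  then obtain a where a0: "a \<in> L u" "{nb t v, a} \<in> HE" by (blast dest: ex1_implies_ex)
  have "\<exists>!b. b \<in> L v \<and> {nb t u, b} \<in> HE"
    by (rule partner[OF insertI2[OF u] insertI2[OF v] exy(1) nu(1)])
  then obtain b where b0: "b \<in> L v" "{nb t u, b} \<in> HE" by (blast dest: ex1_implies_ex)
  have "a \<noteq> nb t u" using a0 nn by (auto simp: insert_commute)
  then have a: "a \<in> Lt t u" using a0 Lt_eq[OF t u] by auto
  have "b \<noteq> nb t v" using b0 nn by auto
  then have b: "b \<in> Lt t v" using b0 Lt_eq[OF t v] by auto
  have aonly: "y = nb t v" if "y \<in> L v" "{a, y} \<in> HE" for y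
    using c4[of u v a y "nb t v"] that u v exy a0 nv by (auto simp: insert_commute)
  have bonly: "y = nb t u" if "y \<in> L u" "{b, y} \<in> HE" for y
    using c4[of v u b y "nb t u"] that u v exy b0 nu by (auto simp: insert_commute)
  have nab: "{a, b} \<notin> HE"
  proof
    assume "{a, b} \<in> HE"
    then have "b = nb t v" using aonly b0 by auto
    then show False using b Lt_eq[OF t v] by auto
  qed
  have ab: "a \<noteq> b" using a0 b0 own_uniq[of u v a] u v uv by auto
  define HE' where "HE' = insert {a, b} (HEt t)"
  have covT: "is_cover V E (Lt t) (HVt t) (HEt t)" by (rule covt[OF t])
  note cp = covT[unfolded is_cover_def]
  note cp1 = cp[THEN conjunct1]
  note cp3 = cp[THEN conjunct2, THEN conjunct2, THEN conjunct1]
  note cp4 = cp[THEN conjunct2, THEN conjunct2, THEN conjunct2, THEN conjunct1]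
  note cp5 = cp[THEN conjunct2, THEN conjunct2, THEN conjunct2, THEN conjunct2, THEN conjunct1]
  note cp6 = cp[THEN conjunct2, THEN conjunct2, THEN conjunct2, THEN conjunct2, THEN conjunct2]
  have aH: "a \<in> HVt t" "b \<in> HVt t" using a b u v unfolding HVt_def by auto
  have HEt_HE: "e \<in> HEt t \<Longrightarrow> e \<in> HE" for e unfolding HEt_def by auto
  have cov': "is_cover V E (Lt t) (HVt t) HE'"
  proof -
    have s1: "simple_graph (HVt t) HE'"
      unfolding simple_graph_def
    proof (intro conjI ballI)
      show "finite (HVt t)" using cp1 unfolding simple_graph_def by simp
    next
      fix e assume "e \<in> HE'"
      then show "\<exists>x y. e = {x, y} \<and> x \<noteq> y \<and> x \<in> HVt t \<and> y \<in> HVt t"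
      proof (cases "e = {a, b}")
        case True then show ?thesis using ab aH by blast
      next
        case False
        then have "e \<in> HEt t" using \<open>e \<in> HE'\<close> unfolding HE'_def by auto
        then show ?thesis using cp1 unfolding simple_graph_def by blast
      qed
    qed
    have s2: "(\<Union>v\<in>V. Lt t v) = HVt t" by (simp add: HVt_def)
    have s3: "\<forall>u\<in>V. \<forall>v\<in>V. u \<noteq> v \<longrightarrow> Lt t u \<inter> Lt t v = {}" using cp3 .
    have s4: "\<forall>u\<in>V. \<forall>x\<in>Lt t u. \<forall>y\<in>Lt t u. x \<noteq> y \<longrightarrow> {x, y} \<in> HE'"
      using cp4 unfolding HE'_def by blast
    have s5: "\<forall>p\<in>V. \<forall>q\<in>V. (\<exists>x\<in>Lt t p. \<exists>y\<in>Lt t q. {x, y} \<in> HE') \<longrightarrow> p = q \<or> {p, q} \<in> E"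
    proof (intro ballI impI)
      fix p q assume pq: "p \<in> V" "q \<in> V" and "\<exists>x\<in>Lt t p. \<exists>y\<in>Lt t q. {x, y} \<in> HE'"
      then obtain x y where xy: "x \<in> Lt t p" "y \<in> Lt t q" "{x, y} \<in> HE'" by blast
      show "p = q \<or> {p, q} \<in> E"
      proof (cases "{x, y} = {a, b}")
        case True
        have l: "x \<in> L p" "y \<in> L q" using xy Lt_sub by auto
        from True have "(x = a \<and> y = b) \<or> (x = b \<and> y = a)" by (auto simp: doubleton_eq_iff)
        then show ?thesis
        proof
          assume "x = a \<and> y = b"
          then have "p = u" "q = v" using own_uniq l a0 b0 pq u v by auto
          then show ?thesis using uvE by simp
        next
          assume "x = b \<and> y = a"
          then have "p = v" "q = u" using own_uniq l a0 b0 pq u v by auto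
          then show ?thesis using uvE by (simp add: insert_commute)
        qed
      next
        case False
        then have "{x, y} \<in> HEt t" using xy unfolding HE'_def by auto
        then show ?thesis using cp5 pq xy by blast
      qed
    qed
    have s6: "\<forall>p\<in>V. \<forall>q\<in>V. {p, q} \<in> E \<longrightarrow>
        (\<forall>x\<in>Lt t p. \<forall>y1\<in>Lt t q. \<forall>y2\<in>Lt t q. {x, y1} \<in> HE' \<longrightarrow> {x, y2} \<in> HE' \<longrightarrow> y1 = y2)"
    proof (intro ballI impI)
      fix p q x y1 y2 assume pq: "p \<in> V" "q \<in> V" "{p, q} \<in> E" and x: "x \<in> Lt t p"
        and y1: "y1 \<in> Lt t q" and y2: "y2 \<in> Lt t q" and e1: "{x, y1} \<in> HE'" and e2: "{x, y2} \<in> HE'"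
      have bad: False if "{x, y} = {a, b}" "y' \<in> Lt t q" "{x, y'} \<in> HEt t" "y \<in> Lt t q" for y y'
      proof -
        have y'L: "y' \<in> L q" "y \<in> L q" using that Lt_sub by auto
        have eH: "{x, y'} \<in> HE" using that HEt_HE by auto
        from that(1) have "(x = a \<and> y = b) \<or> (x = b \<and> y = a)" by (auto simp: doubleton_eq_iff)
        then show False
        proof
          assume h: "x = a \<and> y = b"
          then have "q = v" using own_uniq[of q v b] y'L b0 pq v by auto
          then have "y' = nb t v" using aonly y'L eH h by auto
          then show False using that(2) \<open>q = v\<close> Lt_eq[OF t v] by auto
        next
          assume h: "x = b \<and> y = a"
          then have "q = u" using own_uniq[of q u a] y'L a0 pq u by auto
          then have "y' = nb t u" using bonly y'L eH h by auto
          then show False using that(2) \<open>q = u\<close> Lt_eq[OF t u] by auto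
        qed
      qed
      show "y1 = y2"
      proof (cases "{x, y1} = {a, b}")
        case T1: True
        show ?thesis
        proof (cases "{x, y2} = {a, b}")
          case True
          then show ?thesis using T1 by (auto simp: doubleton_eq_iff)
        next
          case False
          then have "{x, y2} \<in> HEt t" using e2 unfolding HE'_def by auto
          then show ?thesis using bad[OF T1 y2 _ y1] by simp
        qed
      next
        case F1: False
        then have h1: "{x, y1} \<in> HEt t" using e1 unfolding HE'_def by auto
        show ?thesis
        proof (cases "{x, y2} = {a, b}")
          case True
          then show ?thesis using bad[OF True y1 h1 y2] by simp
        next
          case False
          then have "{x, y2} \<in> HEt t" using e2 unfolding HE'_def by auto
          then show ?thesis using cp6 pq x y1 y2 h1 by blast
        qed
      qed
    qed
    show ?thesis unfolding is_cover_def by (intro conjI s1 s2 s3 s4 s5 s6)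
  qed
  define Dt where "Dt = {J. J \<subseteq> HVt t \<and> independent (HEt t) J \<and> card J = card V}"
  define D' where "D' = {J. J \<subseteq> HVt t \<and> independent HE' J \<and> card J = card V}"
  define Dab where "Dab = {J. J \<subseteq> HVt t \<and> independent (HEt t) J \<and> card J = card V \<and> a \<in> J \<and> b \<in> J}"
  have split: "Dt = D' \<union> Dab" unfolding Dt_def D'_def Dab_def HE'_def indep_insert by auto
  have dj: "D' \<inter> Dab = {}" unfolding D'_def Dab_def HE'_def indep_insert by auto
  have finDt: "finite Dt"
  proof (rule finite_subset)
    show "Dt \<subseteq> Pow HV" unfolding Dt_def using HVt_sub by auto
    show "finite (Pow HV)" using finHV by simp
  qed
  have "card Dt = card D' + card Dab"
    using card_Un_disjoint[of D' Dab] finDt split dj by (metis finite_Un)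
  moreover have "P_DP V E (m - 1) \<le> card D'"
    using P_DP_le[OF cov' mft[OF t] finV] unfolding P_DP_cover_def D'_def by simp
  moreover have "(m - col V E - 2) ^ (card V - 2) \<le> card Dab"
    using greedy_count[OF t u v uv a b nab mge] unfolding Dab_def by simp
  ultimately show ?thesis unfolding P_DP_cover_def Dt_def by simp
qed

end

theorem mainTheorem17:
  fixes V :: "'a set" and E :: "'a set set" and w :: 'a
    and L :: "'a \<Rightarrow> 'b set" and HV :: "'b set" and HE :: "'b set set"
    and n d m s :: nat
  assumes G: "simple_graph V E" and conn: "connected_graph V E"
    and n_def: "n = card V"
    and d_def: "d = col V E" and d3: "d \<ge> 3"
    and w_new: "w \<notin> V"
    and cover: "is_cover (join_V w V) (join_E w V E) L HV HE"
    and mfold: "m_fold (join_V w V) L m"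
    and m_ge: "m \<ge> d + 3"
    and perfect: "\<forall>u\<in>join_V w V. \<forall>v\<in>join_V w V. {u, v} \<in> join_E w V E \<longrightarrow>
                    perfect_matching_between HE (L u) (L v)"
    and s_def: "s = card {t \<in> L w. \<not> level_vertex V E L HE m t}"
  shows "P_DP_cover (join_V w V) HV HE \<ge> m * P_DP V E (m - 1) + s * (m - d - 2) ^ (n - 2)"
proof -
  interpret S17 V E w L HV HE m using G w_new cover mfold perfect by unfold_locales
  define P where "P = P_DP V E (m - 1)"
  define X where "X = (m - d - 2) ^ (n - 2)"
  define Q where "Q t = (\<not> level_vertex V E L HE m t)" for t
  have Lw: "finite (L w)" "card (L w) = m" using finL cardL by auto
  have bnd: "P + (if Q t then X else 0) \<le> P_DP_cover V (HVt t) (HEt t)" if t: "t \<in> L w" for t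
  proof (cases "Q t")
    case True
    then show ?thesis using nonlevel_bound[OF t] m_ge unfolding P_def X_def Q_def d_def n_def by simp
  next
    case False
    then show ?thesis using Pt_ge[OF t] unfolding P_def by simp
  qed
  have "(\<Sum>t\<in>L w. P + (if Q t then X else 0)) \<le> (\<Sum>t\<in>L w. P_DP_cover V (HVt t) (HEt t))"
    by (rule sum_mono) (rule bnd)
  moreover have "(\<Sum>t\<in>L w. P + (if Q t then X else 0)) = m * P + card {t \<in> L w. Q t} * X"
  proof -
    have "(\<Sum>t\<in>L w. (if Q t then X else 0)) = (\<Sum>t\<in>{t \<in> L w. Q t}. X)"
      using sum.inter_filter[OF Lw(1), of "\<lambda>_. X" Q] by simp
    then show ?thesis using Lw by (simp add: sum.distrib)
  qed
  ultimately show ?thesis using decomp unfolding P_def X_def s_def Q_def by simp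
qed


end
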